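(* Let $\alpha=(\alpha_1,\ldots,\alpha_m)$ be a partition of $n$ and let $r\in\mathbb{N}$ with $r\ge 1$. Then there is a natural isomorphism of species $$\mathbf{C}_{\alpha}\circ X^r=\mathbf{C}_{\alpha^r},$$ where $\alpha^r$ is the partition of $nr$ containing exactly $r$ copies of each part $\alpha_i$ of $\alpha$.
   Context: A (combinatorial) species is a functor from the category of finite sets with bijections to the category of finite sets with maps; equality of species means natural isomorphism. For a subgroup $H\le S_n$, the molecular species $X^n/H$ is defined by $(X^n/H)[U]=\{\lambda H:\lambda:[n]\to U \text{ a bijection}\}$, where $\lambda H=\{\lambda\circ f: f\in H\}$, and $(X^n/H)[\tau](\lambda H)=(\tau\circ\lambda)H$ for a bijection $\tau:U\to V$. For a partition $\alpha=(\alpha_1,\ldots,\alpha_k)$ of $n$, the standard permutation $\sigma_\alpha\in S_n$ is $(1,\ldots,\alpha_1)(\alpha_1+1,\ldots,\alpha_1+\alpha_2)\cdots$, i.e. the cycles of lengths $\alpha_1,\ldots,\alpha_k$ are filled with $1,\ldots,n$ in increasing order; and $\mathbf{C}_\alpha:=X^n/\langle\sigma_\alpha\rangle$. $X^r$ is the species of lists of length $r$ ($X^r[U]$ = set of bijections $[r]\to U$ if $|U|=r$, empty otherwise). For species $F,G$ with $G[\emptyset]=\emptyset$, the composition is $(F\circ G)[U]=\bigsqcup_{\pi}F[\pi]\times\prod_{B\in\pi}G[B]$, the union over set partitions $\pi$ of $U$, with the induced transport of structure. *)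

theory Defs
  imports Main "HOL-Library.FuncSet" "HOL-Library.Disjoint_Sets"
begin

text \<open>A species on label type 'a is given by a structure map S (finite label set U
  to the set of structures on U) and a transport map T: T tau U s is the transport of
  s in S U along a bijection tau from U onto tau ` U.\<close>

definition nat_iso ::
  "('a set \<Rightarrow> 's set) \<Rightarrow> (('a \<Rightarrow> 'a) \<Rightarrow> 'a set \<Rightarrow> 's \<Rightarrow> 's)
   \<Rightarrow> ('a set \<Rightarrow> 't set) \<Rightarrow> (('a \<Rightarrow> 'a) \<Rightarrow> 'a set \<Rightarrow> 't \<Rightarrow> 't) \<Rightarrow> bool" where
  "nat_iso S1 T1 S2 T2 \<longleftrightarrow>
     (\<exists>\<phi> :: 'a set \<Rightarrow> 's \<Rightarrow> 't.
        (\<forall>U. finite U \<longrightarrow> bij_betw (\<phi> U) (S1 U) (S2 U)) \<and>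
        (\<forall>U V \<tau>. finite U \<and> bij_betw \<tau> U V \<longrightarrow>
            (\<forall>s\<in>S1 U. \<phi> V (T1 \<tau> U s) = T2 \<tau> U (\<phi> U s))))"

definition bijs_from :: "nat \<Rightarrow> 'a set \<Rightarrow> (nat \<Rightarrow> 'a) set" where
  "bijs_from n U = {l. l \<in> extensional {1..n} \<and> bij_betw l {1..n} U}"

text \<open>Species X^r of lists.\<close>
definition lists_S :: "nat \<Rightarrow> 'a set \<Rightarrow> (nat \<Rightarrow> 'a) set" where
  "lists_S r U = bijs_from r U"

definition lists_T :: "nat \<Rightarrow> ('a \<Rightarrow> 'a) \<Rightarrow> 'a set \<Rightarrow> (nat \<Rightarrow> 'a) \<Rightarrow> (nat \<Rightarrow> 'a)" where
  "lists_T r \<tau> U l = compose {1..r} \<tau> l"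

text \<open>Molecular species X^n/H, H a set of permutations of {1..n}.\<close>
definition lcoset :: "(nat \<Rightarrow> 'a) \<Rightarrow> (nat \<Rightarrow> nat) set \<Rightarrow> (nat \<Rightarrow> 'a) set" where
  "lcoset l H = (\<lambda>f. l \<circ> f) ` H"

definition mol_S :: "nat \<Rightarrow> (nat \<Rightarrow> nat) set \<Rightarrow> 'a set \<Rightarrow> (nat \<Rightarrow> 'a) set set" where
  "mol_S n H U = {lcoset l H | l. l \<in> bijs_from n U}"

definition mol_T :: "nat \<Rightarrow> ('a \<Rightarrow> 'a) \<Rightarrow> 'a set \<Rightarrow> (nat \<Rightarrow> 'a) set \<Rightarrow> (nat \<Rightarrow> 'a) set" where
  "mol_T n \<tau> U c = (\<lambda>\<mu>. compose {1..n} \<tau> \<mu>) ` c"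

text \<open>Standard permutation sigma_alpha: cycles (s+1 ... s+a) filled consecutively.\<close>
fun std_perm_aux :: "nat list \<Rightarrow> nat \<Rightarrow> nat \<Rightarrow> nat" where
  "std_perm_aux [] s i = i"
| "std_perm_aux (a # as) s i =
     (if s < i \<and> i \<le> s + a then (if i = s + a then s + 1 else i + 1)
      else std_perm_aux as (s + a) i)"

definition std_perm :: "nat list \<Rightarrow> nat \<Rightarrow> nat" where
  "std_perm \<alpha> = std_perm_aux \<alpha> 0"

definition is_partition :: "nat \<Rightarrow> nat list \<Rightarrow> bool" where
  "is_partition n \<alpha> \<longleftrightarrow> (\<forall>a\<in>set \<alpha>. 0 < a) \<and> sum_list \<alpha> = n \<and> sorted_wrt (\<ge>) \<alpha>"

text \<open>C_alpha = X^n / <sigma_alpha>.\<close>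
definition cyc_S :: "nat list \<Rightarrow> 'a set \<Rightarrow> (nat \<Rightarrow> 'a) set set" where
  "cyc_S \<alpha> = mol_S (sum_list \<alpha>) (range (\<lambda>k. std_perm \<alpha> ^^ k))"

definition cyc_T :: "nat list \<Rightarrow> ('a \<Rightarrow> 'a) \<Rightarrow> 'a set \<Rightarrow> (nat \<Rightarrow> 'a) set \<Rightarrow> (nat \<Rightarrow> 'a) set" where
  "cyc_T \<alpha> = mol_T (sum_list \<alpha>)"

definition rep_parts :: "nat \<Rightarrow> nat list \<Rightarrow> nat list" where
  "rep_parts r \<alpha> = concat (map (\<lambda>a. replicate r a) \<alpha>)"

text \<open>Composition F o G: set partition pi of U, F-structure on pi, G-structure on each block.\<close>
definition comp_S :: "('a set set \<Rightarrow> 'f set) \<Rightarrow> ('a set \<Rightarrow> 'g set) \<Rightarrow> 'a set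
                      \<Rightarrow> ('a set set \<times> 'f \<times> ('a set \<Rightarrow> 'g)) set" where
  "comp_S SF SG U = {(\<pi>, s, g). partition_on U \<pi> \<and> s \<in> SF \<pi> \<and> g \<in> extensional \<pi> \<and>
                                (\<forall>B\<in>\<pi>. g B \<in> SG B)}"

definition comp_T :: "(('a set \<Rightarrow> 'a set) \<Rightarrow> 'a set set \<Rightarrow> 'f \<Rightarrow> 'f)
     \<Rightarrow> (('a \<Rightarrow> 'a) \<Rightarrow> 'a set \<Rightarrow> 'g \<Rightarrow> 'g) \<Rightarrow> ('a \<Rightarrow> 'a) \<Rightarrow> 'a set
     \<Rightarrow> ('a set set \<times> 'f \<times> ('a set \<Rightarrow> 'g)) \<Rightarrow> ('a set set \<times> 'f \<times> ('a set \<Rightarrow> 'g))" where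
  "comp_T TF TG \<tau> U x = (case x of (\<pi>, s, g) \<Rightarrow>
     ((`) \<tau> ` \<pi>, TF ((`) \<tau>) \<pi> s,
      restrict (\<lambda>B'. let B = the_inv_into \<pi> ((`) \<tau>) B' in TG \<tau> B (g B)) ((`) \<tau> ` \<pi>)))"

end

theory Submission
  imports Defs
begin

locale iso_setup =
  fixes n r N :: nat and e :: "nat \<times> nat \<Rightarrow> nat" and s t :: "nat \<Rightarrow> nat"
  assumes e_bij: "bij_betw e ({1..n}\<times>{1..r}) {1..N}"
  and s_in: "\<And>p. p \<in> {1..n} \<Longrightarrow> s p \<in> {1..n}"
  and s_out: "\<And>x. x \<notin> {1..n} \<Longrightarrow> s x = x"
  and t_out: "\<And>x. x \<notin> {1..N} \<Longrightarrow> t x = x"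
  and comm: "\<And>p j. p \<in> {1..n} \<Longrightarrow> j \<in> {1..r} \<Longrightarrow> t (e (p,j)) = e (s p, j)"
  and r_pos: "1 \<le> r"
begin

definition einv where "einv = the_inv_into ({1..n}\<times>{1..r}) e"

definition Lam :: "(nat \<Rightarrow> 'b) \<Rightarrow> ('b \<Rightarrow> nat \<Rightarrow> 'c) \<Rightarrow> nat \<Rightarrow> 'c" where
  "Lam \<mu> g = restrict (\<lambda>q. case einv q of (p,j) \<Rightarrow> g (\<mu> p) j) {1..N}"

lemma einv_e: "p \<in> {1..n} \<Longrightarrow> j \<in> {1..r} \<Longrightarrow> einv (e (p,j)) = (p,j)"
  unfolding einv_def by (rule the_inv_into_f_f[OF bij_betw_imp_inj_on[OF e_bij]]) auto

lemma e_in: "p \<in> {1..n} \<Longrightarrow> j \<in> {1..r} \<Longrightarrow> e (p,j) \<in> {1..N}"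
  using bij_betw_apply[OF e_bij] by auto

lemma e_cover: "q \<in> {1..N} \<Longrightarrow> \<exists>p j. p \<in> {1..n} \<and> j \<in> {1..r} \<and> q = e (p,j)"
proof -
  assume "q \<in> {1..N}"
  then have "q \<in> e ` ({1..n}\<times>{1..r})" using bij_betw_imp_surj_on[OF e_bij] by simp
  then show ?thesis by force
qed

lemma Lam_e: "p \<in> {1..n} \<Longrightarrow> j \<in> {1..r} \<Longrightarrow> Lam \<mu> g (e (p,j)) = g (\<mu> p) j"
  using e_in einv_e by (simp add: Lam_def)

lemma Lam_out: "q \<notin> {1..N} \<Longrightarrow> Lam \<mu> g q = undefined"
  unfolding Lam_def restrict_def by auto

lemma spow_in: "p \<in> {1..n} \<Longrightarrow> (s^^k) p \<in> {1..n}"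
  by (induction k) (simp, metis s_in comp_apply funpow.simps(2))

lemma spow_out: "x \<notin> {1..n} \<Longrightarrow> (s^^k) x = x"
  by (induction k) (auto simp: s_out)

lemma tpow_out: "x \<notin> {1..N} \<Longrightarrow> (t^^k) x = x"
  by (induction k) (auto simp: t_out)

lemma tpow_comm: "p \<in> {1..n} \<Longrightarrow> j \<in> {1..r} \<Longrightarrow> (t^^k) (e (p,j)) = e ((s^^k) p, j)"
proof (induction k)
  case (Suc k)
  then show ?case using comm[OF spow_in[OF Suc.prems(1)] Suc.prems(2), of k] by simp
qed simp

lemma Lam_shift: "Lam (\<mu> \<circ> (s^^k)) g = Lam \<mu> g \<circ> (t^^k)"
proof (rule ext)
  fix q
  show "Lam (\<mu> \<circ> (s^^k)) g q = (Lam \<mu> g \<circ> (t^^k)) q"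
  proof (cases "q \<in> {1..N}")
    case True
    then obtain p j where pj: "p \<in> {1..n}" "j \<in> {1..r}" "q = e (p,j)" using e_cover by blast
    have 1: "Lam (\<mu> \<circ> (s^^k)) g q = g (\<mu> ((s^^k) p)) j"
      using Lam_e[OF pj(1,2), of "\<mu> \<circ> (s^^k)" g] pj(3) by simp
    have 2: "(Lam \<mu> g \<circ> (t^^k)) q = g (\<mu> ((s^^k) p)) j"
      using Lam_e[OF spow_in[OF pj(1)] pj(2), of \<mu> g] tpow_comm[OF pj(1,2), of k] pj(3) by simp
    show ?thesis using 1 2 by simp
  next
    case False
    then show ?thesis by (simp add: Lam_out tpow_out)
  qed
qed

lemma Lam_lcoset: "(\<lambda>\<mu>. Lam \<mu> g) ` lcoset l (range (\<lambda>k. s^^k)) = lcoset (Lam l g) (range (\<lambda>k. t^^k))"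
  by (simp add: lcoset_def image_image Lam_shift)

lemma self_in: "l \<in> lcoset l (range (\<lambda>k. f^^k))"
proof -
  have "l = l \<circ> (f^^0)" by simp
  then show ?thesis unfolding lcoset_def by blast
qed

lemma lcoset_sub: "lcoset (l \<circ> (s^^k)) (range (\<lambda>k. s^^k)) \<subseteq> lcoset l (range (\<lambda>k. s^^k))"
proof
  fix x assume "x \<in> lcoset (l \<circ> (s^^k)) (range (\<lambda>k. s^^k))"
  then obtain m where "x = l \<circ> (s^^k) \<circ> (s^^m)" by (auto simp: lcoset_def)
  then have "x = l \<circ> (s^^(k+m))" by (simp add: funpow_add comp_assoc)
  then show "x \<in> lcoset l (range (\<lambda>k. s^^k))" by (auto simp: lcoset_def)
qed

definition phi where "phi x = (case x of (\<pi>, c, g) \<Rightarrow> (\<lambda>\<mu>. Lam \<mu> g) ` c)"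

lemma S1_iff: "x \<in> comp_S (mol_S n (range (\<lambda>k. s^^k))) (lists_S r) U \<longleftrightarrow>
  (\<exists>\<pi> l g. x = (\<pi>, lcoset l (range (\<lambda>k. s^^k)), g) \<and> partition_on U \<pi> \<and> l \<in> bijs_from n \<pi> \<and>
     g \<in> extensional \<pi> \<and> (\<forall>B\<in>\<pi>. g B \<in> bijs_from r B))"
  unfolding comp_S_def mol_S_def lists_S_def by (cases x) (simp, blast)

lemma F_bij:
  assumes P: "partition_on U \<pi>" and l: "l \<in> bijs_from n \<pi>" and g: "\<forall>B\<in>\<pi>. g B \<in> bijs_from r B"
  shows "bij_betw (\<lambda>(p,j). g (l p) j) ({1..n}\<times>{1..r}) U"
proof -
  have lb: "bij_betw l {1..n} \<pi>" using l by (simp add: bijs_from_def)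
  have gb: "\<And>B. B \<in> \<pi> \<Longrightarrow> bij_betw (g B) {1..r} B" using g by (simp add: bijs_from_def)
  have U: "U = \<Union>\<pi>" using P by (simp add: partition_on_def)
  have dj: "disjoint \<pi>" using P by (simp add: partition_on_def)
  show ?thesis unfolding bij_betw_def
  proof
    show "inj_on (\<lambda>(p,j). g (l p) j) ({1..n}\<times>{1..r})"
    proof (rule inj_onI, clarify)
      fix p j p' j'
      assume as: "p \<in> {1..n}" "j \<in> {1..r}" "p' \<in> {1..n}" "j' \<in> {1..r}" "g (l p) j = g (l p') j'"
      have lp: "l p \<in> \<pi>" "l p' \<in> \<pi>" using bij_betw_apply[OF lb as(1)] bij_betw_apply[OF lb as(3)] by auto
      have m1: "g (l p) j \<in> l p" using bij_betw_apply[OF gb[OF lp(1)] as(2)] .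
      have m2: "g (l p') j' \<in> l p'" using bij_betw_apply[OF gb[OF lp(2)] as(4)] .
      have "l p \<inter> l p' \<noteq> {}" using m1 m2 as(5) by auto
      then have lpp: "l p = l p'" using dj lp unfolding disjoint_def by blast
      have pp: "p = p'" by (rule inj_onD[OF bij_betw_imp_inj_on[OF lb] lpp as(1) as(3)])
      have "g (l p) j = g (l p) j'" using as(5) lpp by simp
      then have "j = j'" by (rule inj_onD[OF bij_betw_imp_inj_on[OF gb[OF lp(1)]] _ as(2) as(4)])
      with pp show "p = p' \<and> j = j'" by simp
    qed
    show "(\<lambda>(p,j). g (l p) j) ` ({1..n}\<times>{1..r}) = U"
    proof
      show "(\<lambda>(p,j). g (l p) j) ` ({1..n}\<times>{1..r}) \<subseteq> U"
      proof clarify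
        fix p j assume as: "p \<in> {1..n}" "j \<in> {1..r}"
        have lp: "l p \<in> \<pi>" using bij_betw_apply[OF lb as(1)] .
        have "g (l p) j \<in> l p" using bij_betw_apply[OF gb[OF lp] as(2)] .
        then show "g (l p) j \<in> U" using U lp by blast
      qed
      show "U \<subseteq> (\<lambda>(p,j). g (l p) j) ` ({1..n}\<times>{1..r})"
      proof
        fix u assume "u \<in> U"
        then obtain B where B: "B \<in> \<pi>" "u \<in> B" using U by blast
        then obtain p where p: "p \<in> {1..n}" "B = l p" using lb unfolding bij_betw_def by blast
        obtain j where j: "j \<in> {1..r}" "u = g B j" using gb[OF B(1)] B(2) unfolding bij_betw_def by blast
        show "u \<in> (\<lambda>(p,j). g (l p) j) ` ({1..n}\<times>{1..r})"
        proof (rule image_eqI[of _ _ "(p,j)"])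
          show "u = (\<lambda>(p,j). g (l p) j) (p,j)" using p j by simp
          show "(p,j) \<in> {1..n}\<times>{1..r}" using p j by blast
        qed
      qed
    qed
  qed
qed

lemma Lam_bij:
  assumes P: "partition_on U \<pi>" and l: "l \<in> bijs_from n \<pi>" and g: "\<forall>B\<in>\<pi>. g B \<in> bijs_from r B"
  shows "Lam l g \<in> bijs_from N U"
proof -
  have "bij_betw einv {1..N} ({1..n}\<times>{1..r})" unfolding einv_def
    by (rule bij_betw_the_inv_into[OF e_bij])
  then have bj: "bij_betw ((\<lambda>(p,j). g (l p) j) \<circ> einv) {1..N} U"
    using F_bij[OF assms] bij_betw_trans by blast
  have eq: "\<And>q. q \<in> {1..N} \<Longrightarrow> Lam l g q = ((\<lambda>(p,j). g (l p) j) \<circ> einv) q"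
    unfolding Lam_def by (simp only: restrict_apply') simp
  have "bij_betw (Lam l g) {1..N} U"
    by (subst bij_betw_cong[OF eq]) (assumption, rule bj)
  moreover have "Lam l g \<in> extensional {1..N}" unfolding Lam_def by (rule restrict_extensional)
  ultimately show ?thesis unfolding bijs_from_def by blast
qed


lemma natural:
  assumes tau: "bij_betw \<tau> U V" and x: "x \<in> comp_S (mol_S n (range (\<lambda>k. s^^k))) (lists_S r) U"
  shows "phi (comp_T (mol_T n) (lists_T r) \<tau> U x) = mol_T N \<tau> U (phi x)"
proof -
  obtain \<pi> l g where xd: "x = (\<pi>, lcoset l (range (\<lambda>k. s^^k)), g)" and P: "partition_on U \<pi>"
    and l: "l \<in> bijs_from n \<pi>" and g: "g \<in> extensional \<pi>" and gB: "\<forall>B\<in>\<pi>. g B \<in> bijs_from r B"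
    using x S1_iff by blast
  define c where "c = lcoset l (range (\<lambda>k. s^^k))"
  define g' where "g' = restrict (\<lambda>B'. let B = the_inv_into \<pi> ((`) \<tau>) B' in lists_T r \<tau> B (g B)) ((`) \<tau> ` \<pi>)"
  have T: "comp_T (mol_T n) (lists_T r) \<tau> U x = ((`) \<tau> ` \<pi>, (\<lambda>\<mu>. compose {1..n} ((`) \<tau>) \<mu>) ` c, g')"
    unfolding xd comp_T_def mol_T_def c_def g'_def by simp
  have lb: "bij_betw l {1..n} \<pi>" using l by (simp add: bijs_from_def)
  have gb: "\<And>B. B \<in> \<pi> \<Longrightarrow> bij_betw (g B) {1..r} B" using gB by (simp add: bijs_from_def)
  have Usub: "\<And>B. B \<in> \<pi> \<Longrightarrow> B \<subseteq> U" using P by (auto simp: partition_on_def)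
  have injt: "inj_on \<tau> U" using tau by (simp add: bij_betw_def)
  have injpi: "inj_on ((`) \<tau>) \<pi>"
  proof (rule inj_onI)
    fix A B assume "A \<in> \<pi>" "B \<in> \<pi>" "\<tau> ` A = \<tau> ` B"
    then show "A = B" using inj_on_image_eq_iff[OF injt Usub[of A] Usub[of B]] by simp
  qed
  have key: "Lam (compose {1..n} ((`) \<tau>) \<mu>) g' = compose {1..N} \<tau> (Lam \<mu> g)" if mu: "\<mu> \<in> c" for \<mu>
  proof -
    obtain k where mk: "\<mu> = l \<circ> (s^^k)" using mu by (auto simp: c_def lcoset_def)
    have mp: "\<mu> p \<in> \<pi>" if "p \<in> {1..n}" for p
      using mk spow_in[OF that, of k] bij_betw_apply[OF lb] by simp
    show ?thesis
    proof (rule ext)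
      fix q
      show "Lam (compose {1..n} ((`) \<tau>) \<mu>) g' q = compose {1..N} \<tau> (Lam \<mu> g) q"
      proof (cases "q \<in> {1..N}")
        case True
        then obtain p j where pj: "p \<in> {1..n}" "j \<in> {1..r}" "q = e (p,j)" using e_cover by blast
        have inv: "the_inv_into \<pi> ((`) \<tau>) (\<tau> ` \<mu> p) = \<mu> p"
          by (rule the_inv_into_f_f[OF injpi mp[OF pj(1)]])
        have img: "\<tau> ` \<mu> p \<in> (`) \<tau> ` \<pi>" using mp[OF pj(1)] by blast
        have "Lam (compose {1..n} ((`) \<tau>) \<mu>) g' q = g' (compose {1..n} ((`) \<tau>) \<mu> p) j"
          using Lam_e[OF pj(1,2), of "compose {1..n} ((`) \<tau>) \<mu>" g'] pj(3) by simp
        also have "\<dots> = g' (\<tau> ` \<mu> p) j" using pj(1) by (simp add: compose_def)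
        also have "\<dots> = lists_T r \<tau> (\<mu> p) (g (\<mu> p)) j" using img inv by (simp add: g'_def Let_def)
        also have "\<dots> = \<tau> (g (\<mu> p) j)" using pj(2) by (simp add: lists_T_def compose_def)
        also have "\<dots> = compose {1..N} \<tau> (Lam \<mu> g) q"
          using Lam_e[OF pj(1,2), of \<mu> g] pj(3) True by (simp add: compose_def)
        finally show ?thesis .
      next
        case False
        then show ?thesis by (auto simp: Lam_out compose_def)
      qed
    qed
  qed
  have "phi (comp_T (mol_T n) (lists_T r) \<tau> U x) = (\<lambda>\<mu>. Lam (compose {1..n} ((`) \<tau>) \<mu>) g') ` c"
    unfolding T phi_def by (simp add: image_image)
  also have "\<dots> = (\<lambda>\<mu>. compose {1..N} \<tau> (Lam \<mu> g)) ` c"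
    using key by (rule image_cong[OF refl])
  also have "\<dots> = mol_T N \<tau> U (phi x)"
    unfolding xd phi_def mol_T_def c_def by (simp add: image_image)
  finally show ?thesis .
qed


lemma phi_lcoset: "phi (\<pi>, lcoset l (range (\<lambda>k. s^^k)), g) = lcoset (Lam l g) (range (\<lambda>k. t^^k))"
  unfolding phi_def using Lam_lcoset by simp

lemma inj_half:
  assumes l: "l \<in> bijs_from n \<pi>" and gB: "\<forall>B\<in>\<pi>. g B \<in> bijs_from r B"
    and l': "l' \<in> bijs_from n \<pi>'" and gB': "\<forall>B\<in>\<pi>'. g' B \<in> bijs_from r B"
    and mem: "Lam l g \<in> lcoset (Lam l' g') (range (\<lambda>k. t^^k))"
  shows "\<pi> \<subseteq> \<pi>'" "lcoset l (range (\<lambda>k. s^^k)) \<subseteq> lcoset l' (range (\<lambda>k. s^^k))"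
    "\<forall>B\<in>\<pi>. g B = g' B"
proof -
  obtain k where k: "Lam l g = Lam l' g' \<circ> (t^^k)" using mem by (auto simp: lcoset_def)
  then have k2: "Lam l g = Lam (l' \<circ> (s^^k)) g'" by (simp add: Lam_shift)
  have lb: "bij_betw l {1..n} \<pi>" and le: "l \<in> extensional {1..n}" using l by (auto simp: bijs_from_def)
  have lb': "bij_betw l' {1..n} \<pi>'" and le': "l' \<in> extensional {1..n}" using l' by (auto simp: bijs_from_def)
  have gb: "\<And>B. B \<in> \<pi> \<Longrightarrow> bij_betw (g B) {1..r} B" and ge: "\<And>B. B \<in> \<pi> \<Longrightarrow> g B \<in> extensional {1..r}"
    using gB by (auto simp: bijs_from_def)
  have gb': "\<And>B. B \<in> \<pi>' \<Longrightarrow> bij_betw (g' B) {1..r} B" and ge': "\<And>B. B \<in> \<pi>' \<Longrightarrow> g' B \<in> extensional {1..r}"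
    using gB' by (auto simp: bijs_from_def)
  have val: "g (l p) j = g' (l' ((s^^k) p)) j" if "p \<in> {1..n}" "j \<in> {1..r}" for p j
    using Lam_e[OF that, of l g] Lam_e[OF that, of "l' \<circ> (s^^k)" g'] k2 by simp
  have blk: "l p = l' ((s^^k) p)" if p: "p \<in> {1..n}" for p
  proof -
    have lp: "l p \<in> \<pi>" using bij_betw_apply[OF lb p] .
    have lp': "l' ((s^^k) p) \<in> \<pi>'" using bij_betw_apply[OF lb' spow_in[OF p]] .
    have "l p = g (l p) ` {1..r}" using gb[OF lp] by (simp add: bij_betw_def)
    also have "\<dots> = g' (l' ((s^^k) p)) ` {1..r}" using val[OF p] by (intro image_cong) auto
    also have "\<dots> = l' ((s^^k) p)" using gb'[OF lp'] by (simp add: bij_betw_def)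
    finally show ?thesis .
  qed
  have leq: "l = l' \<circ> (s^^k)"
  proof (rule ext)
    fix x show "l x = (l' \<circ> (s^^k)) x"
    proof (cases "x \<in> {1..n}")
      case True then show ?thesis using blk by simp
    next
      case False then show ?thesis using le le' spow_out[OF False, of k] by (simp add: extensional_def)
    qed
  qed
  have pi: "\<pi> = l ` {1..n}" using lb by (simp add: bij_betw_def)
  show "\<pi> \<subseteq> \<pi>'"
  proof
    fix B assume "B \<in> \<pi>"
    then obtain p where p: "p \<in> {1..n}" "B = l p" using pi by blast
    then show "B \<in> \<pi>'" using blk[OF p(1)] bij_betw_apply[OF lb' spow_in[OF p(1)]] by simp
  qed
  show "lcoset l (range (\<lambda>k. s^^k)) \<subseteq> lcoset l' (range (\<lambda>k. s^^k))"
    using leq lcoset_sub by simp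
  show "\<forall>B\<in>\<pi>. g B = g' B"
  proof
    fix B assume B: "B \<in> \<pi>"
    then obtain p where p: "p \<in> {1..n}" "B = l p" using pi by blast
    have B': "B \<in> \<pi>'" using p blk[OF p(1)] bij_betw_apply[OF lb' spow_in[OF p(1)]] by simp
    show "g B = g' B"
    proof (rule extensionalityI[OF ge[OF B] ge'[OF B']])
      fix j assume j: "j \<in> {1..r}"
      show "g B j = g' B j" using val[OF p(1) j] blk[OF p(1)] p(2) by simp
    qed
  qed
qed

lemma phi_inj: "inj_on phi (comp_S (mol_S n (range (\<lambda>k. s^^k))) (lists_S r) U)"
proof (rule inj_onI)
  fix x y
  assume x: "x \<in> comp_S (mol_S n (range (\<lambda>k. s^^k))) (lists_S r) U"
    and y: "y \<in> comp_S (mol_S n (range (\<lambda>k. s^^k))) (lists_S r) U" and eq: "phi x = phi y"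
  obtain \<pi> l g where xd: "x = (\<pi>, lcoset l (range (\<lambda>k. s^^k)), g)"
    and l: "l \<in> bijs_from n \<pi>" and g: "g \<in> extensional \<pi>" and gB: "\<forall>B\<in>\<pi>. g B \<in> bijs_from r B"
    using x S1_iff by blast
  obtain \<pi>' l' g' where yd: "y = (\<pi>', lcoset l' (range (\<lambda>k. s^^k)), g')"
    and l': "l' \<in> bijs_from n \<pi>'" and g': "g' \<in> extensional \<pi>'" and gB': "\<forall>B\<in>\<pi>'. g' B \<in> bijs_from r B"
    using y S1_iff by blast
  have E: "lcoset (Lam l g) (range (\<lambda>k. t^^k)) = lcoset (Lam l' g') (range (\<lambda>k. t^^k))"
    using eq xd yd by (simp add: phi_lcoset)
  have m1: "Lam l g \<in> lcoset (Lam l' g') (range (\<lambda>k. t^^k))" using E self_in by metis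
  have m2: "Lam l' g' \<in> lcoset (Lam l g) (range (\<lambda>k. t^^k))" using E self_in by metis
  note h1 = inj_half[OF l gB l' gB' m1]
  note h2 = inj_half[OF l' gB' l gB m2]
  have pe: "\<pi> = \<pi>'" using h1(1) h2(1) by blast
  have ce: "lcoset l (range (\<lambda>k. s^^k)) = lcoset l' (range (\<lambda>k. s^^k))" using h1(2) h2(2) by blast
  have ge: "g = g'"
    by (rule extensionalityI[OF g]) (use g' pe h1(3) in auto)
  show "x = y" using xd yd pe ce ge by simp
qed


lemma phi_surj:
  assumes Lb: "\<Lambda> \<in> bijs_from N U"
  shows "\<exists>x \<in> comp_S (mol_S n (range (\<lambda>k. s^^k))) (lists_S r) U. phi x = lcoset \<Lambda> (range (\<lambda>k. t^^k))"
proof -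
  have Lbb: "bij_betw \<Lambda> {1..N} U" and Le: "\<Lambda> \<in> extensional {1..N}" using Lb by (auto simp: bijs_from_def)
  define blk where "blk p = (\<lambda>j. \<Lambda> (e (p,j))) ` {1..r}" for p
  define l where "l = restrict blk {1..n}"
  define \<pi> where "\<pi> = blk ` {1..n}"
  define ip where "ip = the_inv_into {1..n} blk"
  define g where "g = restrict (\<lambda>B. restrict (\<lambda>j. \<Lambda> (e (ip B, j))) {1..r}) \<pi>"
  have r1: "1 \<in> {1..r}" using r_pos by simp
  have injL: "p = p' \<and> j = j'" if "\<Lambda> (e (p,j)) = \<Lambda> (e (p',j'))" "p \<in> {1..n}" "p' \<in> {1..n}"
    "j \<in> {1..r}" "j' \<in> {1..r}" for p p' j j'
  proof -
    have "e (p,j) = e (p',j')"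
      using that(1) e_in[OF that(2,4)] e_in[OF that(3,5)] bij_betw_imp_inj_on[OF Lbb] inj_onD by metis
    then have "(p,j) = (p',j')" using that(2-5) bij_betw_imp_inj_on[OF e_bij] inj_onD by (metis SigmaI)
    then show ?thesis by simp
  qed
  have blk_inj: "inj_on blk {1..n}"
  proof (rule inj_onI)
    fix p p' assume p: "p \<in> {1..n}" "p' \<in> {1..n}" "blk p = blk p'"
    have "\<Lambda> (e (p,1)) \<in> blk p'" using p(3) r1 by (auto simp: blk_def)
    then obtain j where "j \<in> {1..r}" "\<Lambda> (e (p,1)) = \<Lambda> (e (p',j))" by (auto simp: blk_def)
    then show "p = p'" using injL p r1 by blast
  qed
  have blkU: "blk p \<subseteq> U" if "p \<in> {1..n}" for p
    using bij_betw_apply[OF Lbb e_in[OF that]] by (auto simp: blk_def)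
  have lb: "bij_betw l {1..n} \<pi>"
  proof -
    have "bij_betw blk {1..n} \<pi>" using blk_inj by (simp add: bij_betw_def \<pi>_def)
    then show ?thesis by (subst bij_betw_cong[of _ l blk]) (auto simp: l_def)
  qed
  have l: "l \<in> bijs_from n \<pi>" using lb by (simp add: bijs_from_def l_def)
  have P: "partition_on U \<pi>"
    unfolding partition_on_def
  proof (intro conjI)
    show "\<Union>\<pi> = U"
    proof
      show "\<Union>\<pi> \<subseteq> U" unfolding \<pi>_def using blkU by blast
      show "U \<subseteq> \<Union>\<pi>"
      proof
        fix u assume "u \<in> U"
        then obtain q where q: "q \<in> {1..N}" "u = \<Lambda> q" using Lbb by (auto simp: bij_betw_def)
        then obtain p j where pj: "p \<in> {1..n}" "j \<in> {1..r}" "q = e (p,j)" using e_cover by blast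
        have "u \<in> blk p" using pj q by (auto simp: blk_def)
        then show "u \<in> \<Union>\<pi>" using pj(1) by (auto simp: \<pi>_def)
      qed
    qed
    show "disjoint \<pi>"
      unfolding disjoint_def
    proof (intro ballI impI)
      fix a b assume ab: "a \<in> \<pi>" "b \<in> \<pi>" "a \<noteq> b"
      obtain p where p1: "p \<in> {1..n}" "a = blk p" using ab(1) unfolding \<pi>_def by blast
      obtain p' where p2: "p' \<in> {1..n}" "b = blk p'" using ab(2) unfolding \<pi>_def by blast
      note pp = p1(1) p2(1) p1(2) p2(2)
      show "a \<inter> b = {}"
      proof (rule ccontr)
        assume "a \<inter> b \<noteq> {}"
        then obtain z where z: "z \<in> a" "z \<in> b" by blast
        obtain j where j: "j \<in> {1..r}" "z = \<Lambda> (e (p,j))" using z(1) pp(3) unfolding blk_def by blast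
        obtain j' where j': "j' \<in> {1..r}" "z = \<Lambda> (e (p',j'))" using z(2) pp(4) unfolding blk_def by blast
        from j j' have "j \<in> {1..r}" "j' \<in> {1..r}" "\<Lambda> (e (p,j)) = \<Lambda> (e (p',j'))" by auto
        then have "p = p'" using injL pp by blast
        then show False using ab pp by simp
      qed
    qed
    show "{} \<notin> \<pi>" using r1 by (auto simp: \<pi>_def blk_def)
  qed
  have gext: "g \<in> extensional \<pi>" by (simp add: g_def)
  have gval: "g (blk p) = restrict (\<lambda>j. \<Lambda> (e (p, j))) {1..r}" if p: "p \<in> {1..n}" for p
  proof -
    have "ip (blk p) = p" unfolding ip_def by (rule the_inv_into_f_f[OF blk_inj p])
    moreover have "blk p \<in> \<pi>" using p by (simp add: \<pi>_def)
    ultimately show ?thesis by (simp add: g_def)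
  qed
  have gB: "\<forall>B\<in>\<pi>. g B \<in> bijs_from r B"
  proof
    fix B assume "B \<in> \<pi>"
    then obtain p where p: "p \<in> {1..n}" "B = blk p" by (auto simp: \<pi>_def)
    have "bij_betw (\<lambda>j. \<Lambda> (e (p, j))) {1..r} B"
      unfolding bij_betw_def
    proof
      show "inj_on (\<lambda>j. \<Lambda> (e (p, j))) {1..r}" using injL p(1) by (auto intro: inj_onI)
      show "(\<lambda>j. \<Lambda> (e (p, j))) ` {1..r} = B" using p(2) by (simp add: blk_def)
    qed
    then have "bij_betw (restrict (\<lambda>j. \<Lambda> (e (p, j))) {1..r}) {1..r} B"
      by (subst bij_betw_cong[of _ _ "\<lambda>j. \<Lambda> (e (p, j))"]) auto
    then show "g B \<in> bijs_from r B" using gval[OF p(1)] p(2) by (simp add: bijs_from_def)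
  qed
  define x where "x = (\<pi>, lcoset l (range (\<lambda>k. s^^k)), g)"
  have xin: "x \<in> comp_S (mol_S n (range (\<lambda>k. s^^k))) (lists_S r) U"
    unfolding S1_iff x_def using P l gext gB by blast
  have LL: "Lam l g = \<Lambda>"
  proof (rule ext)
    fix q show "Lam l g q = \<Lambda> q"
    proof (cases "q \<in> {1..N}")
      case True
      then obtain p j where pj: "p \<in> {1..n}" "j \<in> {1..r}" "q = e (p,j)" using e_cover by blast
      show ?thesis using Lam_e[OF pj(1,2), of l g] pj gval[OF pj(1)] by (simp add: l_def)
    next
      case False
      then show ?thesis using Le by (simp add: Lam_out extensional_def)
    qed
  qed
  have px: "phi x = lcoset \<Lambda> (range (\<lambda>k. t^^k))" unfolding x_def by (simp add: phi_lcoset LL)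
  show ?thesis
    apply (rule bexI[of _ x])
     apply (rule px)
    apply (rule xin)
    done
qed

lemma img_sub: "phi ` comp_S (mol_S n (range (\<lambda>k. s^^k))) (lists_S r) U \<subseteq> mol_S N (range (\<lambda>k. t^^k)) U"
proof
  fix y assume "y \<in> phi ` comp_S (mol_S n (range (\<lambda>k. s^^k))) (lists_S r) U"
  then obtain x where x: "x \<in> comp_S (mol_S n (range (\<lambda>k. s^^k))) (lists_S r) U" and y: "y = phi x" by blast
  obtain \<pi> l g where xd: "x = (\<pi>, lcoset l (range (\<lambda>k. s^^k)), g)" and P: "partition_on U \<pi>"
    and l: "l \<in> bijs_from n \<pi>" and gB: "\<forall>B\<in>\<pi>. g B \<in> bijs_from r B"
    using x S1_iff by blast
  have L: "Lam l g \<in> bijs_from N U" by (rule Lam_bij[OF P l gB])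
  have "y = lcoset (Lam l g) (range (\<lambda>k. t^^k))" using y xd by (simp add: phi_lcoset)
  then show "y \<in> mol_S N (range (\<lambda>k. t^^k)) U" unfolding mol_S_def using L by blast
qed

lemma img_sup: "mol_S N (range (\<lambda>k. t^^k)) U \<subseteq> phi ` comp_S (mol_S n (range (\<lambda>k. s^^k))) (lists_S r) U"
proof
  fix y assume "y \<in> mol_S N (range (\<lambda>k. t^^k)) U"
  then obtain \<Lambda> where L: "y = lcoset \<Lambda> (range (\<lambda>k. t^^k))" "\<Lambda> \<in> bijs_from N U"
    by (auto simp: mol_S_def)
  obtain x where x: "x \<in> comp_S (mol_S n (range (\<lambda>k. s^^k))) (lists_S r) U" "phi x = lcoset \<Lambda> (range (\<lambda>k. t^^k))"
    using phi_surj[OF L(2)] by blast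
  show "y \<in> phi ` comp_S (mol_S n (range (\<lambda>k. s^^k))) (lists_S r) U"
    using x L(1) by (metis rev_image_eqI)
qed

lemma phi_bij: "bij_betw phi (comp_S (mol_S n (range (\<lambda>k. s^^k))) (lists_S r) U) (mol_S N (range (\<lambda>k. t^^k)) U)"
  unfolding bij_betw_def using phi_inj img_sub img_sup by blast

theorem iso: "nat_iso (comp_S (mol_S n (range (\<lambda>k. s^^k))) (lists_S r) :: 'a set \<Rightarrow> _)
    (comp_T (mol_T n) (lists_T r)) (mol_S N (range (\<lambda>k. t^^k))) (mol_T N)"
  unfolding nat_iso_def
  apply (rule exI[of _ "\<lambda>U. phi"])
  apply (intro conjI allI impI ballI)
   apply (rule phi_bij)
  apply (erule conjE)
  apply (erule natural)
  apply assumption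
  done

end

lemma sp_out: "i \<le> s \<or> s + sum_list \<alpha> < i \<Longrightarrow> std_perm_aux \<alpha> s i = i"
  by (induction \<alpha> arbitrary: s) auto

lemma sp_in: "s < i \<Longrightarrow> i \<le> s + sum_list \<alpha> \<Longrightarrow>
    s < std_perm_aux \<alpha> s i \<and> std_perm_aux \<alpha> s i \<le> s + sum_list \<alpha>"
proof (induction \<alpha> arbitrary: s)
  case Nil then show ?case by simp
next
  case (Cons a as)
  show ?case
  proof (cases "s < i \<and> i \<le> s + a")
    case True then show ?thesis by auto
  next
    case False
    then have "s + a < i" using Cons.prems by auto
    then show ?thesis using Cons.IH[of "s + a"] Cons.prems False by auto
  qed
qed

lemma sp_append: "std_perm_aux (xs @ ys) s i =
   (if s < i \<and> i \<le> s + sum_list xs then std_perm_aux xs s i else std_perm_aux ys (s + sum_list xs) i)"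
  by (induction xs arbitrary: s) (auto simp: add.assoc)

lemma sp_rep: "j < r \<Longrightarrow> 1 \<le> t \<Longrightarrow> t \<le> a \<Longrightarrow>
  std_perm_aux (replicate r a) S (S + j*a + t) = S + j*a + (if t = a then 1 else t + 1)"
proof (induction r arbitrary: S j)
  case 0 then show ?case by simp
next
  case (Suc r)
  show ?case
  proof (cases j)
    case 0 then show ?thesis using Suc.prems by auto
  next
    case (Suc j')
    have eq: "S + j*a + t = (S + a) + j'*a + t" using Suc by simp
    have ne: "\<not> (S < S + j*a + t \<and> S + j*a + t \<le> S + a)" using Suc \<open>1 \<le> t\<close> by auto
    have "std_perm_aux (replicate (Suc r) a) S (S + j*a + t) = std_perm_aux (replicate r a) (S + a) (S + j*a + t)"
      using ne by (simp only: replicate_Suc std_perm_aux.simps if_False)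
    also have "\<dots> = std_perm_aux (replicate r a) (S + a) ((S + a) + j'*a + t)"
      by (simp only: eq)
    also have "\<dots> = (S + a) + j'*a + (if t = a then 1 else t + 1)"
      using Suc.IH[of j' "S + a"] Suc.prems Suc by simp
    also have "\<dots> = S + j*a + (if t = a then 1 else t + 1)" using Suc by simp
    finally show ?thesis .
  qed
qed

fun epos :: "nat \<Rightarrow> nat list \<Rightarrow> nat \<Rightarrow> nat \<Rightarrow> nat \<Rightarrow> nat" where
  "epos r [] s p j = 0"
| "epos r (a # as) s p j = (if s < p \<and> p \<le> s + a then r*s + (j-1)*a + (p-s) else epos r as (s+a) p j)"

lemma epos_range: "s < p \<Longrightarrow> p \<le> s + sum_list \<alpha> \<Longrightarrow> 1 \<le> j \<Longrightarrow> j \<le> r \<Longrightarrow>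
   r*s < epos r \<alpha> s p j \<and> epos r \<alpha> s p j \<le> r*(s + sum_list \<alpha>)"
proof (induction \<alpha> arbitrary: s)
  case Nil then show ?case by simp
next
  case (Cons a as)
  show ?case
  proof (cases "s < p \<and> p \<le> s + a")
    case True
    have "(j-1)*a + a \<le> r*a" using Cons.prems
      by (metis Suc_diff_1 less_eq_Suc_le mult_Suc mult_le_mono1 add.commute le_less_trans less_numeral_extra(1) linorder_not_le)
    moreover have "r*(s + sum_list (a#as)) = r*s + r*a + r*sum_list as" by (simp add: algebra_simps)
    moreover have "epos r (a#as) s p j = r*s + (j-1)*a + (p-s)" using True by simp
    ultimately show ?thesis using True by linarith
  next
    case False
    then have "s + a < p" using Cons.prems by auto
    then have "r*(s+a) < epos r as (s+a) p j \<and> epos r as (s+a) p j \<le> r*(s + a + sum_list as)"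
      using Cons.IH[of "s+a"] Cons.prems by (simp add: add.assoc)
    moreover have "r*s \<le> r*(s+a)" by simp
    moreover have cf: "(s < p \<and> p \<le> s + a) = False" using False by simp
    moreover have "epos r (a#as) s p j = epos r as (s+a) p j" by (simp only: epos.simps cf if_False)
    moreover have "r*(s + a + sum_list as) = r*(s + sum_list (a#as))" by simp
    ultimately show ?thesis by linarith
  qed
qed

lemma divmod_uniq:
  fixes x y u v a :: nat
  assumes "x*a + u = y*a + v" "u < a" "v < a"
  shows "x = y \<and> u = v"
proof -
  have "x = y"
  proof (rule ccontr)
    assume "x \<noteq> y"
    then consider "x < y" | "y < x" by linarith
    then show False
    proof cases
      case 1
      then have "(x+1)*a \<le> y*a" using mult_le_mono1[of "x+1" y a] by simp
      then show False using assms by (simp add: algebra_simps)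
    next
      case 2
      then have "(y+1)*a \<le> x*a" using mult_le_mono1[of "y+1" x a] by simp
      then show False using assms by (simp add: algebra_simps)
    qed
  qed
  then show ?thesis using assms by simp
qed

lemma epos_inj: "s < p \<Longrightarrow> p \<le> s + sum_list \<alpha> \<Longrightarrow> s < p' \<Longrightarrow> p' \<le> s + sum_list \<alpha> \<Longrightarrow>
   1 \<le> j \<Longrightarrow> j \<le> r \<Longrightarrow> 1 \<le> j' \<Longrightarrow> j' \<le> r \<Longrightarrow>
   epos r \<alpha> s p j = epos r \<alpha> s p' j' \<Longrightarrow> p = p' \<and> j = j'"
proof (induction \<alpha> arbitrary: s)
  case Nil then show ?case by simp
next
  case (Cons a as)
  show ?case
  proof (cases "s < p \<and> p \<le> s + a")
    case T1: True
    show ?thesis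
    proof (cases "s < p' \<and> p' \<le> s + a")
      case T2: True
      have "(j-1)*a + (p-s-1) = (j'-1)*a + (p'-s-1)" using Cons.prems(9) T1 T2 by simp
      then have "j-1 = j'-1 \<and> p-s-1 = p'-s-1" by (rule divmod_uniq) (use T1 T2 in auto)
      then show ?thesis using T1 T2 Cons.prems by auto
    next
      case F2: False
      have "(j-1)*a + a \<le> r*a" using Cons.prems
        by (metis Suc_diff_1 less_eq_Suc_le mult_Suc mult_le_mono1 add.commute le_less_trans less_numeral_extra(1) linorder_not_le)
      moreover have "epos r (a#as) s p j = r*s + (j-1)*a + (p-s)" using T1 by simp
      moreover have "r*(s+a) = r*s + r*a" by (simp add: algebra_simps)
      ultimately have "epos r (a#as) s p j \<le> r*(s+a)" using T1 by linarith
      moreover have "r*(s+a) < epos r as (s+a) p' j'"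
        using epos_range[of "s+a" p' as j' r] F2 Cons.prems by (auto simp: add.assoc)
      ultimately show ?thesis using Cons.prems(9) F2 by simp
    qed
  next
    case F1: False
    show ?thesis
    proof (cases "s < p' \<and> p' \<le> s + a")
      case T2: True
      have "(j'-1)*a + a \<le> r*a" using Cons.prems
        by (metis Suc_diff_1 less_eq_Suc_le mult_Suc mult_le_mono1 add.commute le_less_trans less_numeral_extra(1) linorder_not_le)
      moreover have "epos r (a#as) s p' j' = r*s + (j'-1)*a + (p'-s)" using T2 by simp
      moreover have "r*(s+a) = r*s + r*a" by (simp add: algebra_simps)
      ultimately have "epos r (a#as) s p' j' \<le> r*(s+a)" using T2 by linarith
      moreover have "r*(s+a) < epos r as (s+a) p j"
        using epos_range[of "s+a" p as j r] F1 Cons.prems by (auto simp: add.assoc)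
      ultimately show ?thesis using Cons.prems(9) F1 by simp
    next
      case F2: False
      show ?thesis using Cons.IH[of "s+a"] Cons.prems F1 F2 by (auto simp: add.assoc)
    qed
  qed
qed

lemma sum_rep: "sum_list (rep_parts r \<alpha>) = r * sum_list \<alpha>"
  by (induction \<alpha>) (auto simp: rep_parts_def sum_list_replicate algebra_simps)

lemma rep_cons: "rep_parts r (a # as) = replicate r a @ rep_parts r as"
  by (simp add: rep_parts_def)

lemma epos_comm: "s < p \<Longrightarrow> p \<le> s + sum_list \<alpha> \<Longrightarrow> 1 \<le> j \<Longrightarrow> j \<le> r \<Longrightarrow>
  std_perm_aux (rep_parts r \<alpha>) (r*s) (epos r \<alpha> s p j) = epos r \<alpha> s (std_perm_aux \<alpha> s p) j"
proof (induction \<alpha> arbitrary: s)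
  case Nil then show ?case by simp
next
  case (Cons a as)
  show ?case
  proof (cases "s < p \<and> p \<le> s + a")
    case True
    define q where "q = (if p = s + a then s + 1 else p + 1)"
    have q: "std_perm_aux (a#as) s p = q" using True by (simp add: q_def)
    have qin: "s < q \<and> q \<le> s + a" using True by (auto simp: q_def)
    have jr: "j - 1 < r" using Cons.prems by simp
    have ev: "epos r (a#as) s p j = r*s + (j-1)*a + (p-s)" using True by simp
    have "(j-1)*a + a \<le> r*a" using Cons.prems
      by (metis Suc_diff_1 less_eq_Suc_le mult_Suc mult_le_mono1 add.commute le_less_trans less_numeral_extra(1) linorder_not_le)
    moreover have "sum_list (replicate r a) = r*a" by (simp add: sum_list_replicate)
    ultimately have inb: "r*s < r*s + (j-1)*a + (p-s) \<and> r*s + (j-1)*a + (p-s) \<le> r*s + sum_list (replicate r a)"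
      using True by linarith
    have "std_perm_aux (rep_parts r (a#as)) (r*s) (epos r (a#as) s p j)
        = std_perm_aux (replicate r a) (r*s) (r*s + (j-1)*a + (p-s))"
      unfolding rep_cons ev sp_append using inb by simp
    also have "\<dots> = r*s + (j-1)*a + (if p - s = a then 1 else p - s + 1)"
      by (rule sp_rep) (use jr True in auto)
    also have "\<dots> = epos r (a#as) s q j" using qin True by (auto simp: q_def)
    finally show ?thesis using q by simp
  next
    case False
    then have sa: "s + a < p" using Cons.prems by auto
    define q where "q = std_perm_aux as (s + a) p"
    have cf: "(s < p \<and> p \<le> s + a) = False" using False by simp
    have q: "std_perm_aux (a#as) s p = q" by (simp only: q_def std_perm_aux.simps cf if_False)
    have qin: "s + a < q \<and> q \<le> s + a + sum_list as" using sp_in[of "s+a" p as] sa Cons.prems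
      by (simp add: q_def add.assoc)
    have ev: "epos r (a#as) s p j = epos r as (s+a) p j" by (simp only: epos.simps cf if_False)
    have rng: "r*(s+a) < epos r as (s+a) p j"
      using epos_range[of "s+a" p as j r] sa Cons.prems by (simp add: add.assoc)
    have "std_perm_aux (rep_parts r (a#as)) (r*s) (epos r (a#as) s p j)
        = std_perm_aux (rep_parts r as) (r*(s+a)) (epos r as (s+a) p j)"
      unfolding rep_cons ev sp_append using rng by (simp add: sum_list_replicate algebra_simps)
    also have "\<dots> = epos r as (s+a) q j"
      using Cons.IH[of "s+a"] sa Cons.prems by (simp add: q_def add.assoc)
    also have "\<dots> = epos r (a#as) s q j" using qin by simp
    finally show ?thesis using q by simp
  qed
qed


theorem mainTheorem1:
  fixes \<alpha> :: "nat list" and n r :: nat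
  assumes "is_partition n \<alpha>" and "1 \<le> r"
  shows "nat_iso (comp_S (cyc_S \<alpha>) (lists_S r) :: 'a set \<Rightarrow> _)
                 (comp_T (cyc_T \<alpha>) (lists_T r))
                 (cyc_S (rep_parts r \<alpha>)) (cyc_T (rep_parts r \<alpha>))"
proof -
  define e where "e = (\<lambda>(p,j). epos r \<alpha> 0 p j)"
  have NN: "sum_list (rep_parts r \<alpha>) = r * sum_list \<alpha>" by (rule sum_rep)
  have e_inj: "inj_on e ({1..sum_list \<alpha>}\<times>{1..r})"
  proof (rule inj_onI, clarify)
    fix p j p' j'
    assume as: "p \<in> {1..sum_list \<alpha>}" "j \<in> {1..r}" "p' \<in> {1..sum_list \<alpha>}" "j' \<in> {1..r}"
      "e (p,j) = e (p',j')"
    then show "p = p' \<and> j = j'" using epos_inj[of 0 p \<alpha> p' j r j'] by (simp add: e_def)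
  qed
  have e_sub: "e ` ({1..sum_list \<alpha>}\<times>{1..r}) \<subseteq> {1..sum_list (rep_parts r \<alpha>)}"
  proof clarify
    fix p j assume "p \<in> {1..sum_list \<alpha>}" "j \<in> {1..r}"
    then have "r*0 < epos r \<alpha> 0 p j \<and> epos r \<alpha> 0 p j \<le> r*(0 + sum_list \<alpha>)"
      using epos_range[of 0 p \<alpha> j r] by simp
    then show "e (p,j) \<in> {1..sum_list (rep_parts r \<alpha>)}" using NN by (simp add: e_def)
  qed
  have "card (e ` ({1..sum_list \<alpha>}\<times>{1..r})) = card {1..sum_list (rep_parts r \<alpha>)}"
    using card_image[OF e_inj] NN by (simp add: card_cartesian_product)
  then have e_img: "e ` ({1..sum_list \<alpha>}\<times>{1..r}) = {1..sum_list (rep_parts r \<alpha>)}"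
    using card_subset_eq[OF _ e_sub] by simp
  interpret I: iso_setup "sum_list \<alpha>" r "sum_list (rep_parts r \<alpha>)" e "std_perm \<alpha>" "std_perm (rep_parts r \<alpha>)"
  proof
    show "bij_betw e ({1..sum_list \<alpha>}\<times>{1..r}) {1..sum_list (rep_parts r \<alpha>)}"
      using e_inj e_img by (simp add: bij_betw_def)
    show "std_perm \<alpha> p \<in> {1..sum_list \<alpha>}" if "p \<in> {1..sum_list \<alpha>}" for p
      using sp_in[of 0 p \<alpha>] that by (simp add: std_perm_def)
    show "std_perm \<alpha> x = x" if "x \<notin> {1..sum_list \<alpha>}" for x
    proof -
      have "x \<le> 0 \<or> 0 + sum_list \<alpha> < x" using that by auto
      then show ?thesis using sp_out[of x 0 \<alpha>] by (simp add: std_perm_def)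
    qed
    show "std_perm (rep_parts r \<alpha>) x = x" if "x \<notin> {1..sum_list (rep_parts r \<alpha>)}" for x
    proof -
      have "x \<le> 0 \<or> 0 + sum_list (rep_parts r \<alpha>) < x" using that by auto
      then show ?thesis using sp_out[of x 0 "rep_parts r \<alpha>"] by (simp add: std_perm_def)
    qed
    show "std_perm (rep_parts r \<alpha>) (e (p,j)) = e (std_perm \<alpha> p, j)"
      if "p \<in> {1..sum_list \<alpha>}" "j \<in> {1..r}" for p j
      using epos_comm[of 0 p \<alpha> j r] that by (simp add: std_perm_def e_def)
    show "1 \<le> r" by (rule assms(2))
  qed
  show ?thesis unfolding cyc_S_def cyc_T_def by (rule I.iso)
qed

end
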